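(* In the monkey model with $K\ge2$ letters, space probability $s\in(0,1)$, and equal letter probabilities $q_1=\cdots=q_K=(1-s)/K$, every rank $r\ge1$ satisfies $$\frac1K\,B_r^{\log_{q_1}K}<r<\frac{K}{K-1}\,B_r^{\log_{q_1}K},$$ so the power-law exponent is $-\beta=1/\log_{q_1}K=\frac{\log(1-s)}{\log K}-1$. In particular, for fixed $s$, $-\beta\to-1$ as $K\to\infty$.
   Context: Monkey model: a keyboard has $K$ letters $L_1,\dots,L_K$ struck independently with probabilities $q_1,\dots,q_K$ and a space character with probability $s$, where $\sum_i q_i+s=1$. A word is a finite (possibly empty) string $L_{i_1}\cdots L_{i_n}$ of letters followed by a space. Its base value is $B=q_{i_1}\cdots q_{i_n}$ (the empty word has base value $1$). The base values of all finitely long words, listed with multiplicity in non-increasing order with ties broken by alphabetical order, are denoted $B_1=1\ge B_2\ge\cdots$; $r$ is the rank of $B_r$. *)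

theory Defs
  imports "HOL-Analysis.Analysis"
begin

text \<open>Letters are 0,...,K-1 (letter i has probability q i);
words are finite lists of letters (the trailing space is implicit).\<close>

definition monkey_words :: "nat \<Rightarrow> nat list set" where
  "monkey_words K = {w. set w \<subseteq> {..<K}}"

definition base_value :: "(nat \<Rightarrow> real) \<Rightarrow> nat list \<Rightarrow> real" where
  "base_value q w = prod_list (map q w)"

text \<open>Rank of a word in the list of all words sorted by non-increasing base value,
ties broken alphabetically.\<close>
definition word_rank :: "nat \<Rightarrow> (nat \<Rightarrow> real) \<Rightarrow> nat list \<Rightarrow> nat" where
  "word_rank K q w = Suc (card {v \<in> monkey_words K.
      base_value q v > base_value q w \<or>
      (base_value q v = base_value q w \<and> ord_class.lexordp v w)})"

definition B :: "nat \<Rightarrow> (nat \<Rightarrow> real) \<Rightarrow> nat \<Rightarrow> real" where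
  "B K q r = (THE b. \<exists>w \<in> monkey_words K. word_rank K q w = r \<and> base_value q w = b)"

end

theory Submission
  imports Defs
begin

lemma bv_eq:
  assumes "set w \<subseteq> {..<K}" "\<forall>i<K. q i = p"
  shows "base_value q w = p ^ length w"
  using assms by (induction w) (auto simp: base_value_def)

definition Wn :: "nat \<Rightarrow> nat \<Rightarrow> nat list set" where
  "Wn K n = {v. set v \<subseteq> {..<K} \<and> length v = n}"

definition Ln :: "nat \<Rightarrow> nat \<Rightarrow> nat list set" where
  "Ln K n = {v. set v \<subseteq> {..<K} \<and> length v < n}"

lemma Wn_fin: "finite (Wn K n)" and Wn_card: "card (Wn K n) = K ^ n"
  unfolding Wn_def by (auto intro: finite_lists_length_eq simp: card_lists_length_eq)

lemma Ln_fin: "finite (Ln K n)"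
proof -
  have "Ln K n \<subseteq> {v. set v \<subseteq> {..<K} \<and> length v \<le> n}" unfolding Ln_def by auto
  thus ?thesis using finite_lists_length_le[of "{..<K}" n] finite_subset by blast
qed

lemma Ln_Suc: "Ln K (Suc n) = Ln K n \<union> Wn K n" "Ln K n \<inter> Wn K n = {}"
  unfolding Ln_def Wn_def by auto

lemma Ln_card_Suc: "card (Ln K (Suc n)) = card (Ln K n) + K ^ n"
  using Ln_Suc[of K n] Ln_fin Wn_fin Wn_card card_Un_disjoint by metis

lemma Ln_card_0: "card (Ln K 0) = 0"
  unfolding Ln_def by simp

lemma Ln_mono: "m \<le> n \<Longrightarrow> card (Ln K m) \<le> card (Ln K n)"
  by (induction n rule: dec_induct) (auto simp: Ln_card_Suc)

lemma Ln_ge: "K \<ge> 1 \<Longrightarrow> card (Ln K n) \<ge> n"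
proof (induction n)
  case (Suc n)
  have "K ^ n > 0" using Suc.prems by simp
  moreover have "n \<le> card (Ln K n)" using Suc by simp
  ultimately show ?case unfolding Ln_card_Suc by linarith
qed simp

lemma Ln_real: "K \<ge> 2 \<Longrightarrow> real (card (Ln K n)) * (real K - 1) = real K ^ n - 1"
  by (induction n) (auto simp: Ln_card_Suc Ln_card_0 algebra_simps)

definition cw :: "nat \<Rightarrow> nat list \<Rightarrow> nat" where
  "cw K w = card {v \<in> Wn K (length w). ord_class.lexordp v w}"

lemma cw_lt: assumes "w \<in> Wn K n" shows "cw K w < K ^ n"
proof -
  have l: "length w = n" using assms by (simp add: Wn_def)
  have "{v \<in> Wn K n. ord_class.lexordp v w} \<subset> Wn K n"
    using assms lexordp_irreflexive' by blast
  thus ?thesis unfolding cw_def l using psubset_card_mono Wn_fin Wn_card by metis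
qed

lemma cw_inj: "inj_on (cw K) (Wn K n)"
proof (rule inj_onI, rule ccontr)
  fix v w assume v: "v \<in> Wn K n" and w: "w \<in> Wn K n" and e: "cw K v = cw K w" and ne: "v \<noteq> w"
  have lv: "length v = n" and lw: "length w = n" using v w by (auto simp: Wn_def)
  have key: "cw K a < cw K b" if a: "a \<in> Wn K n" and b: "b \<in> Wn K n" and ab: "ord_class.lexordp a b" for a b
  proof -
    have la: "length a = n" and lb: "length b = n" using a b by (auto simp: Wn_def)
    have "{u \<in> Wn K n. ord_class.lexordp u a} \<subset> {u \<in> Wn K n. ord_class.lexordp u b}"
      using ab a lexordp_trans lexordp_irreflexive' by blast
    hence "card {u \<in> Wn K n. ord_class.lexordp u a} < card {u \<in> Wn K n. ord_class.lexordp u b}"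
      by (rule psubset_card_mono[rotated]) (simp add: Wn_fin)
    thus ?thesis unfolding cw_def la lb .
  qed
  from lexordp_linear[of v w] ne show False
    using key[OF v w] key[OF w v] e by auto
qed

lemma cw_surj: "cw K ` Wn K n = {..<K ^ n}"
proof (rule card_subset_eq)
  show "finite {..<K ^ n}" by simp
  show "cw K ` Wn K n \<subseteq> {..<K ^ n}" using cw_lt by auto
  show "card (cw K ` Wn K n) = card {..<K ^ n}"
    using card_image[OF cw_inj] Wn_card by simp
qed

lemma rank_eq:
  fixes p :: real
  assumes p: "0 < p" "p < 1" and qp: "\<forall>i<K. q i = p" and w: "w \<in> monkey_words K"
  shows "word_rank K q w = Suc (card (Ln K (length w)) + cw K w)"
proof -
  have bvv: "base_value q v = p ^ length v" if "v \<in> monkey_words K" for v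
    using bv_eq[OF _ qp] that by (simp add: monkey_words_def)
  have eqp: "(p ^ a = p ^ b) = (a = b)" for a b
    using power_strict_decreasing_iff[OF p, of a b] power_strict_decreasing_iff[OF p, of b a]
    by (metis linorder_neqE_nat order_less_irrefl)
  have "{v \<in> monkey_words K. base_value q v > base_value q w \<or>
      (base_value q v = base_value q w \<and> ord_class.lexordp v w)}
      = Ln K (length w) \<union> {v \<in> Wn K (length w). ord_class.lexordp v w}"
    using w p by (auto simp: bvv eqp Ln_def Wn_def monkey_words_def)
  moreover have "Ln K (length w) \<inter> {v \<in> Wn K (length w). ord_class.lexordp v w} = {}"
    by (auto simp: Ln_def Wn_def)
  ultimately show ?thesis unfolding word_rank_def cw_def
    by (simp add: card_Un_disjoint Ln_fin Wn_fin)
qed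

lemma interval_unique:
  assumes "card (Ln K a) < r" "r \<le> card (Ln K (Suc a))"
    "card (Ln K b) < r" "r \<le> card (Ln K (Suc b))"
  shows "a = b"
proof (rule ccontr)
  assume "a \<noteq> b"
  then consider "Suc a \<le> b" | "Suc b \<le> a" by linarith
  thus False using assms Ln_mono[of "Suc a" b K] Ln_mono[of "Suc b" a K] by cases auto
qed

lemma B_val:
  fixes p :: real
  assumes K: "K \<ge> 2" and p: "0 < p" "p < 1" and qp: "\<forall>i<K. q i = p" and r: "r \<ge> 1"
  shows "\<exists>n. B K q r = p ^ n \<and> card (Ln K n) < r \<and> r \<le> card (Ln K n) + K ^ n"
proof -
  have ex: "\<exists>m. r \<le> card (Ln K m)" using Ln_ge[of K r] K by auto
  define m where "m = (LEAST m. r \<le> card (Ln K m))"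
  have m1: "r \<le> card (Ln K m)" unfolding m_def using LeastI_ex[OF ex] .
  have m0: "m \<noteq> 0" using m1 r Ln_card_0[of K] by (cases m) auto
  then obtain n where mn: "m = Suc n" by (cases m) auto
  have n1: "card (Ln K n) < r"
    using not_less_Least[of n "\<lambda>m. r \<le> card (Ln K m)"] mn m_def by fastforce
  have n2: "r \<le> card (Ln K n) + K ^ n" using m1 mn Ln_card_Suc by simp
  have "r - 1 - card (Ln K n) \<in> cw K ` Wn K n" using cw_surj n1 n2 by auto
  then obtain w where w: "w \<in> Wn K n" and cw: "cw K w = r - 1 - card (Ln K n)" by auto
  have wm: "w \<in> monkey_words K" and lw: "length w = n" using w by (auto simp: Wn_def monkey_words_def)
  have rk: "word_rank K q w = r" using rank_eq[OF p qp wm] lw cw n1 by simp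
  have bw: "base_value q w = p ^ n" using bv_eq[OF _ qp] w by (simp add: Wn_def)
  have "B K q r = p ^ n" unfolding B_def
  proof (rule the_equality)
    show "\<exists>w\<in>monkey_words K. word_rank K q w = r \<and> base_value q w = p ^ n" using wm rk bw by blast
  next
    fix b assume "\<exists>w\<in>monkey_words K. word_rank K q w = r \<and> base_value q w = b"
    then obtain v where v: "v \<in> monkey_words K" "word_rank K q v = r" "base_value q v = b" by blast
    have rv: "r = Suc (card (Ln K (length v)) + cw K v)" using rank_eq[OF p qp v(1)] v(2) by simp
    have "v \<in> Wn K (length v)" using v(1) by (simp add: Wn_def monkey_words_def)
    hence "cw K v < K ^ length v" by (rule cw_lt)
    hence "length v = n"
      using interval_unique[of K "length v" r n] rv n1 n2 Ln_card_Suc by simp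
    thus "b = p ^ n" using v(3) bv_eq[OF _ qp] v(1) by (simp add: monkey_words_def)
  qed
  thus ?thesis using n1 n2 by blast
qed

theorem mainTheorem2:
  fixes K :: nat and s :: real and q :: "nat \<Rightarrow> real"
  assumes K2: "K \<ge> 2"
    and s_pos: "0 < s" and s_lt1: "s < 1"
    and q_eq: "\<forall>i<K. q i = (1 - s) / real K"
  shows "(\<forall>r::nat. r \<ge> 1 \<longrightarrow>
            1 / real K * B K q r powr log (q 0) (real K) < real r \<and>
            real r < real K / (real K - 1) * B K q r powr log (q 0) (real K))
       \<and> 1 / log (q 0) (real K) = ln (1 - s) / ln (real K) - 1
       \<and> ((\<lambda>k::nat. 1 / log ((1 - s) / real k) (real k)) \<longlongrightarrow> -1) at_top"
proof -
  define p where "p = (1 - s) / real K"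
  have Kr: "real K \<ge> 2" using K2 by simp
  have p0: "0 < p" using s_lt1 Kr by (simp add: p_def)
  have p1: "p < 1" using s_pos Kr by (simp add: p_def field_simps)
  have q0: "q 0 = p" using q_eq K2 by (simp add: p_def)
  have qp: "\<forall>i<K. q i = p" using q_eq p_def by simp
  have part1: "1 / real K * B K q r powr log (q 0) (real K) < real r \<and>
            real r < real K / (real K - 1) * B K q r powr log (q 0) (real K)" if r: "r \<ge> 1" for r
  proof -
    obtain n where n: "B K q r = p ^ n" "card (Ln K n) < r" "r \<le> card (Ln K n) + K ^ n"
      using B_val[OF K2 p0 p1 qp r] by blast
    have pw: "B K q r powr log (q 0) (real K) = real K ^ n"
    proof -
      have "B K q r powr log (q 0) (real K) = (p powr log p (real K)) ^ n"
        using n(1) q0 p0 by (simp add: powr_realpow[symmetric] powr_powr mult.commute)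
      also have "\<dots> = real K ^ n" using p0 p1 Kr by simp
      finally show ?thesis .
    qed
    define S where "S = real (card (Ln K n))"
    have S: "S * (real K - 1) = real K ^ n - 1" using Ln_real[OF K2] S_def by simp
    have r1: "S + 1 \<le> real r" using n(2) S_def by simp
    have r2: "real r \<le> S + real K ^ n" using n(3) S_def
      by (metis of_nat_add of_nat_le_iff of_nat_power)
    have Kn: "real K ^ n \<ge> 1" using Kr by simp
    have Km: "real K - 1 > 0" using Kr by simp
    have lo: "real K ^ n / real K < S + 1"
    proof -
      have "real K ^ n * (real K - 1) < real K * (S + 1) * (real K - 1)"
      proof -
        have e: "real K * (S + 1) * (real K - 1) = real K * real K ^ n + real K * real K - 2 * real K"
        proof -
          have "real K * (S + 1) * (real K - 1) = real K * (S * (real K - 1)) + real K * (real K - 1)"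
            by (simp add: algebra_simps)
          also have "\<dots> = real K * (real K ^ n - 1) + real K * (real K - 1)" using S by simp
          finally show ?thesis by (simp add: algebra_simps)
        qed
        have "real K * real K \<ge> 2 * real K" using Kr by (simp add: mult_right_mono)
        thus ?thesis unfolding e using Kn by (simp add: algebra_simps)
      qed
      hence "real K ^ n < real K * (S + 1)" using Km by simp
      thus ?thesis using Kr by (simp add: field_simps)
    qed
    have hi: "S + real K ^ n < real K / (real K - 1) * real K ^ n"
    proof -
      have "(S + real K ^ n) * (real K - 1) < real K * real K ^ n"
        using S by (simp add: algebra_simps)
      thus ?thesis using Km by (simp add: field_simps)
    qed
    show ?thesis unfolding pw using lo hi r1 r2 by simp
  qed
  have lnK: "ln (real K) > 0" using Kr by simp
  have part2: "1 / log (q 0) (real K) = ln (1 - s) / ln (real K) - 1"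
    using lnK s_lt1 Kr by (simp add: q0 p_def log_def ln_div field_simps)
  have ev: "\<forall>\<^sub>F k in at_top. ln (1 - s) / ln (real k) - 1 = 1 / log ((1 - s) / real k) (real k)"
    using eventually_ge_at_top[of "2::nat"]
  proof (rule eventually_mono)
    fix k :: nat assume k: "2 \<le> k"
    hence "ln (real k) > 0" by simp
    thus "ln (1 - s) / ln (real k) - 1 = 1 / log ((1 - s) / real k) (real k)"
      using s_lt1 k by (simp add: log_def ln_div field_simps)
  qed
  have lim0: "((\<lambda>k::nat. ln (1 - s) / ln (real k)) \<longlongrightarrow> 0) at_top"
  proof -
    have "filterlim (\<lambda>k::nat. ln (real k)) at_top at_top"
      using filterlim_compose[OF ln_at_top filterlim_real_sequentially] by (simp add: o_def)
    hence "((\<lambda>k::nat. ln (real k)) \<longlongrightarrow> 0) at_top \<or> True" by simp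
    show ?thesis
      by (rule tendsto_divide_0[OF tendsto_const])
         (rule filterlim_at_top_imp_at_infinity,
          rule filterlim_compose[OF ln_at_top filterlim_real_sequentially])
  qed
  have "((\<lambda>k::nat. ln (1 - s) / ln (real k) - 1) \<longlongrightarrow> 0 - 1) at_top"
    by (intro tendsto_diff lim0 tendsto_const)
  hence part3: "((\<lambda>k::nat. 1 / log ((1 - s) / real k) (real k)) \<longlongrightarrow> -1) at_top"
    using tendsto_cong[OF ev] by simp
  show ?thesis using part1 part2 part3 by blast
qed

end
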